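(* There are absolute constants $c_1,c_2>0$ such that the following holds. Let $\mathcal U$ be a finite set, $\epsilon<1/400$, $\Pi$ an orthogonal projector on $\mathbb{R}^{\mathcal U}$, and $f:\mathcal U\to\{0,1\}$ with $\Pr_{u\in\mathcal U}[f(u)=1]=\mu>0$ and $\|\Pi f\|_2^2\ge(1-\epsilon)\mu$. Then there is a function $\bar f:\mathcal U\to\mathbb{R}$ such that $\|\Pi\bar f\|_4^4\ge c_1\mu$ and $(\Pi f)(u)^2\ge c_2|\bar f(u)|$ for every $u\in\mathcal U$.
   Context: Norms and inner products on $\mathbb{R}^{\mathcal U}$ use the uniform (expectation) measure: $\langle g,h\rangle=\mathbb{E}_{u}g(u)h(u)$, $\|g\|_p=(\mathbb{E}_u|g(u)|^p)^{1/p}$; orthogonality of $\Pi$ refers to this inner product. *)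

theory Defs
  imports "HOL-Analysis.Analysis"
begin

text \<open>Functions on a finite set U are represented as total functions; only values on U matter.
  All averages use the uniform (expectation) measure on U.\<close>

definition expect :: "'a set \<Rightarrow> ('a \<Rightarrow> real) \<Rightarrow> real" where
  "expect U g = (\<Sum>u\<in>U. g u) / real (card U)"

definition inner_U :: "'a set \<Rightarrow> ('a \<Rightarrow> real) \<Rightarrow> ('a \<Rightarrow> real) \<Rightarrow> real" where
  "inner_U U g h = expect U (\<lambda>u. g u * h u)"

definition lp_norm :: "'a set \<Rightarrow> real \<Rightarrow> ('a \<Rightarrow> real) \<Rightarrow> real" where
  "lp_norm U p g = (expect U (\<lambda>u. \<bar>g u\<bar> powr p)) powr (1 / p)"

definition orth_projector :: "'a set \<Rightarrow> (('a \<Rightarrow> real) \<Rightarrow> ('a \<Rightarrow> real)) \<Rightarrow> bool" where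
  "orth_projector U P \<longleftrightarrow>
     (\<forall>g h. (\<forall>u\<in>U. g u = h u) \<longrightarrow> (\<forall>u\<in>U. P g u = P h u)) \<and>
     (\<forall>g h a b. \<forall>u\<in>U. P (\<lambda>x. a * g x + b * h x) u = a * P g u + b * P h u) \<and>
     (\<forall>g. \<forall>u\<in>U. P (P g) u = P g u) \<and>
     (\<forall>g h. inner_U U (P g) h = inner_U U g (P h))"

end

theory Submission
  imports Defs
begin

lemma expect_nonneg: "(\<And>u. u \<in> U \<Longrightarrow> g u \<ge> 0) \<Longrightarrow> expect U g \<ge> 0"
  unfolding expect_def by (simp add: sum_nonneg)

lemma lp2: "lp_norm U 2 g ^ 2 = expect U (\<lambda>u. (g u)^2)"
proof -
  have e: "expect U (\<lambda>u. \<bar>g u\<bar> powr 2) = expect U (\<lambda>u. (g u)^2)"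
    by simp
  have "expect U (\<lambda>u. (g u)^2) \<ge> 0" by (rule expect_nonneg) simp
  then show ?thesis unfolding lp_norm_def e
    by (metis powr_half_sqrt real_sqrt_pow2 div_by_1 divide_divide_eq_right
        numeral_One one_add_one powr_powr times_divide_eq_left)
qed

lemma lp4: "lp_norm U 4 g ^ 4 = expect U (\<lambda>u. (g u)^4)"
proof -
  have e: "expect U (\<lambda>u. \<bar>g u\<bar> powr 4) = expect U (\<lambda>u. (g u)^4)"
    by (simp add: power_even_abs)
  have x: "expect U (\<lambda>u. (g u)^4) \<ge> 0" by (rule expect_nonneg) simp
  have "(x powr (1/4)) ^ 4 = x" if "x \<ge> 0" for x :: real
  proof -
    have "(x powr (1/4)) ^ 4 = (x powr (1/4)) powr 4" using that by simp
    also have "\<dots> = x" using that by (simp add: powr_powr)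
    finally show ?thesis .
  qed
  then show ?thesis unfolding lp_norm_def e using x by simp
qed

theorem lemma4p11:
  shows "\<exists>c1 c2 :: real. c1 > 0 \<and> c2 > 0 \<and>
    (\<forall>(U :: nat set) (\<epsilon> :: real) (P :: (nat \<Rightarrow> real) \<Rightarrow> (nat \<Rightarrow> real)) (f :: nat \<Rightarrow> real) (\<mu> :: real).
       finite U \<longrightarrow> \<epsilon> < 1 / 400 \<longrightarrow> orth_projector U P \<longrightarrow>
       (\<forall>u\<in>U. f u \<in> {0, 1}) \<longrightarrow>
       \<mu> = real (card {u\<in>U. f u = 1}) / real (card U) \<longrightarrow> \<mu> > 0 \<longrightarrow>
       (lp_norm U 2 (P f)) ^ 2 \<ge> (1 - \<epsilon>) * \<mu> \<longrightarrow>
       (\<exists>fb :: nat \<Rightarrow> real. (lp_norm U 4 (P fb)) ^ 4 \<ge> c1 * \<mu> \<and>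
          (\<forall>u\<in>U. (P f u) ^ 2 \<ge> c2 * \<bar>fb u\<bar>)))"
proof (rule exI[of _ "1/40"], rule exI[of _ "1/4"], intro conjI allI impI)
  fix U :: "nat set" and \<epsilon> :: real and P :: "(nat \<Rightarrow> real) \<Rightarrow> (nat \<Rightarrow> real)" and f :: "nat \<Rightarrow> real" and \<mu> :: real
  assume fin: "finite U" and eps: "\<epsilon> < 1/400" and op: "orth_projector U P"
    and f01: "\<forall>u\<in>U. f u \<in> {0, 1}" and mu: "\<mu> = real (card {u\<in>U. f u = 1}) / real (card U)"
    and mupos: "\<mu> > 0" and hyp: "(lp_norm U 2 (P f)) ^ 2 \<ge> (1 - \<epsilon>) * \<mu>"
  have lin: "\<And>g h a b u. u \<in> U \<Longrightarrow> P (\<lambda>x. a * g x + b * h x) u = a * P g u + b * P h u"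
    using op unfolding orth_projector_def by blast
  have idem: "\<And>g u. u \<in> U \<Longrightarrow> P (P g) u = P g u"
    using op unfolding orth_projector_def by blast
  have sa: "\<And>g h. inner_U U (P g) h = inner_U U g (P h)"
    using op unfolding orth_projector_def by blast
  have Npos: "card U > 0" using mupos mu by (cases "card U = 0") auto
  define N where "N = real (card U)"
  have N: "N > 0" using Npos N_def by simp
  have saS: "(\<Sum>u\<in>U. P g u * h u) = (\<Sum>u\<in>U. g u * P h u)" for g h
    using sa[of g h] N unfolding inner_U_def expect_def N_def[symmetric] by simp
  have sq: "(\<Sum>u\<in>U. (P g u)^2) = (\<Sum>u\<in>U. g u * P g u)" for g
  proof -
    have "(\<Sum>u\<in>U. (P g u)^2) = (\<Sum>u\<in>U. P g u * P g u)" by (simp add: power2_eq_square)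
    also have "\<dots> = (\<Sum>u\<in>U. g u * P (P g) u)" by (rule saS)
    also have "\<dots> = (\<Sum>u\<in>U. g u * P g u)" using idem by (intro sum.cong) auto
    finally show ?thesis .
  qed
  define g where "g = P f"
  define A where "A = (\<Sum>u\<in>U. f u)"
  have A_card: "A = real (card {u\<in>U. f u = 1})"
  proof -
    have "A = (\<Sum>u\<in>U. if f u = 1 then 1 else 0)"
      unfolding A_def using f01 by (intro sum.cong) auto
    also have "\<dots> = (\<Sum>u\<in>{u\<in>U. f u = 1}. 1)" using sum.inter_filter[OF fin, of "\<lambda>_. 1::real" "\<lambda>u. f u = 1"] by simp
    finally show ?thesis by simp
  qed
  have muA: "\<mu> = A / N" using mu A_card N_def by simp
  have Apos: "A > 0" using muA mupos N by (simp add: zero_less_divide_iff)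
  have f2: "(\<Sum>u\<in>U. (f u)^2) = A" unfolding A_def using f01 by (intro sum.cong) auto
  have hypS: "(\<Sum>u\<in>U. (g u)^2) \<ge> (1 - \<epsilon>) * A"
  proof -
    have "(1 - \<epsilon>) * (A / N) \<le> (\<Sum>u\<in>U. (g u)^2) / N"
      using hyp unfolding lp2 expect_def muA N_def[symmetric] g_def by simp
    then have "((1 - \<epsilon>) * A) / N \<le> (\<Sum>u\<in>U. (g u)^2) / N" by simp
    then show ?thesis using N by (simp add: divide_le_cancel)
  qed
  have F1: "(\<Sum>u\<in>U. (g u)^2) = (\<Sum>u\<in>U. f u * g u)" unfolding g_def by (rule sq)
  have F3: "(\<Sum>u\<in>U. (f u - g u)^2) \<le> \<epsilon> * A"
  proof -
    have "(\<Sum>u\<in>U. (f u - g u)^2) = (\<Sum>u\<in>U. (f u)^2) - 2 * (\<Sum>u\<in>U. f u * g u) + (\<Sum>u\<in>U. (g u)^2)"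
      by (simp add: power2_diff sum.distrib sum_subtractf sum_distrib_left algebra_simps)
    then show ?thesis using f2 F1 hypS by (simp add: algebra_simps)
  qed
  define f' where "f' = (\<lambda>x. if f x = 1 \<and> g x \<ge> 1/2 then 1 else (0::real))"
  define d where "d = (\<lambda>x. 1 * f x + (-1) * f' x)"
  define h where "h = P f'"
  have Pd: "u \<in> U \<Longrightarrow> P d u = g u - h u" for u
    unfolding d_def g_def h_def using lin[of u 1 f "-1" f'] by simp
  have dpt: "u \<in> U \<Longrightarrow> (d u)^2 \<le> 4 * (f u - g u)^2" for u
  proof -
    assume u: "u \<in> U"
    then consider "f u = 0" | "f u = 1" using f01 by auto
    then show ?thesis
    proof cases
      case 2
      show ?thesis
      proof (cases "g u \<ge> 1/2")
        case False
        then have "1/2 \<le> f u - g u" using 2 by simp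
        then have "(1/2)^2 \<le> (f u - g u)^2" by (intro power_mono) auto
        then show ?thesis using 2 False unfolding d_def f'_def by (simp add: power2_eq_square)
      qed (use 2 in \<open>simp add: d_def f'_def\<close>)
    qed (simp add: d_def f'_def)
  qed
  have D: "(\<Sum>u\<in>U. (d u)^2) \<le> 4 * (\<epsilon> * A)"
  proof -
    have "(\<Sum>u\<in>U. (d u)^2) \<le> (\<Sum>u\<in>U. 4 * (f u - g u)^2)" using dpt by (rule sum_mono)
    also have "\<dots> \<le> 4 * (\<epsilon> * A)" using F3 by (simp add: sum_distrib_left[symmetric])
    finally show ?thesis .
  qed
  have F4: "(\<Sum>u\<in>U. (P d u)^2) \<le> (\<Sum>u\<in>U. (d u)^2)"
  proof -
    let ?X = "\<Sum>u\<in>U. (P d u)^2" and ?Y = "\<Sum>u\<in>U. (d u)^2"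
    have "?X^2 \<le> ?Y * ?X" using Cauchy_Schwarz_ineq_sum[of d "P d" U] sq[of d] by simp
    moreover have "?X \<ge> 0" by (simp add: sum_nonneg)
    moreover have "?Y \<ge> 0" by (simp add: sum_nonneg)
    ultimately show ?thesis
    proof (cases "?X = 0")
      case False
      assume a: "?X^2 \<le> ?Y * ?X" "?X \<ge> 0"
      then have "?X * ?X \<le> ?Y * ?X" by (simp add: power2_eq_square)
      then show ?thesis using a False mult_le_cancel_right_pos[of ?X ?X ?Y] by simp
    qed simp
  qed
  have hpt: "u \<in> U \<Longrightarrow> (h u)^2 \<ge> (g u)^2 / 2 - (P d u)^2" for u
  proof -
    assume u: "u \<in> U"
    have "h u = g u - P d u" using Pd[OF u] by simp
    moreover have "(a - b)^2 \<ge> a^2/2 - b^2" for a b :: real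
    proof -
      have "(a-b)^2 - (a^2/2 - b^2) = (a-2*b)^2/2" by (simp add: power2_eq_square field_simps)
      moreover have "(a-2*b)^2 \<ge> 0" by simp
      ultimately show ?thesis by linarith
    qed
    ultimately show ?thesis by simp
  qed
  have H2: "(\<Sum>u\<in>U. (h u)^2) \<ge> 2/5 * A"
  proof -
    have "(\<Sum>u\<in>U. (h u)^2) \<ge> (\<Sum>u\<in>U. (g u)^2 / 2 - (P d u)^2)" using hpt by (rule sum_mono)
    moreover have "(\<Sum>u\<in>U. (g u)^2 / 2 - (P d u)^2) = (\<Sum>u\<in>U. (g u)^2) / 2 - (\<Sum>u\<in>U. (P d u)^2)"
      by (simp add: sum_subtractf sum_divide_distrib)
    moreover have "\<epsilon> * A \<le> 1/400 * A" using eps Apos by (intro mult_right_mono) auto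
    moreover have "(1 - \<epsilon>) * A = A - \<epsilon> * A" by (simp add: algebra_simps)
    ultimately show ?thesis using hypS F4 D Apos by linarith
  qed
  have f'2: "(f' u)^2 = f' u" for u unfolding f'_def by simp
  define A' where "A' = (\<Sum>u\<in>U. f' u)"
  have A'le: "A' \<le> A" unfolding A'_def A_def using f01 by (intro sum_mono) (auto simp: f'_def)
  have A'nn: "A' \<ge> 0" unfolding A'_def by (intro sum_nonneg) (simp add: f'_def)
  have F6: "(\<Sum>u\<in>U. (h u)^2) = (\<Sum>u\<in>U. f' u * h u)" unfolding h_def by (rule sq)
  have CS1: "(\<Sum>u\<in>U. f' u * h u)^2 \<le> A' * (\<Sum>u\<in>U. f' u * (h u)^2)"
  proof -
    have "(\<Sum>u\<in>U. f' u * h u) = (\<Sum>u\<in>U. f' u * (f' u * h u))"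
      by (intro sum.cong) (auto simp: f'_def)
    moreover have "(\<Sum>u\<in>U. (f' u * h u)^2) = (\<Sum>u\<in>U. f' u * (h u)^2)"
      by (intro sum.cong) (auto simp: f'_def)
    ultimately show ?thesis using Cauchy_Schwarz_ineq_sum[of f' "\<lambda>u. f' u * h u" U]
      unfolding A'_def f'2 by simp
  qed
  have CS2: "(\<Sum>u\<in>U. f' u * (h u)^2)^2 \<le> A' * (\<Sum>u\<in>U. (h u)^4)"
    using Cauchy_Schwarz_ineq_sum[of f' "\<lambda>u. (h u)^2" U]
    unfolding A'_def f'2 by (simp add: power_mult[symmetric])
  define X where "X = (\<Sum>u\<in>U. (h u)^2)"
  define Y where "Y = (\<Sum>u\<in>U. f' u * (h u)^2)"
  define Z where "Z = (\<Sum>u\<in>U. (h u)^4)"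
  have Zn: "Z \<ge> 0" unfolding Z_def by (simp add: sum_nonneg)
  have X4: "X^4 \<le> A'^3 * Z"
  proof -
    have "X^4 = (X^2)^2" by simp
    also have "\<dots> \<le> (A' * Y)^2"
      using CS1 F6 X_def Y_def by (intro power_mono) (simp_all)
    also have "\<dots> = A'^2 * Y^2" by (simp add: power_mult_distrib)
    also have "\<dots> \<le> A'^2 * (A' * Z)" using CS2 Y_def Z_def by (intro mult_left_mono) simp_all
    finally show ?thesis by (simp add: power_numeral_reduce)
  qed
  have "(2/5 * A)^4 \<le> X^4" using H2 Apos X_def by (intro power_mono) simp_all
  also have "\<dots> \<le> A'^3 * Z" by (rule X4)
  also have "\<dots> \<le> A^3 * Z" using A'le A'nn Zn by (intro mult_right_mono power_mono) simp_all
  finally have "(2/5)^4 * A^4 \<le> A^3 * Z" by (simp only: power_mult_distrib)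
  then have "(2/5)^4 * A \<le> Z" using Apos
    by (simp add: power_numeral_reduce mult.assoc mult_le_cancel_left_pos)
  moreover have "(2/5::real)^4 = 16/625" by (simp add: power_numeral_reduce)
  ultimately have "16/625 * A \<le> Z" by metis
  then have Zb: "1/40 * A \<le> Z" using Apos by linarith
  show "\<exists>fb. 1/40 * \<mu> \<le> lp_norm U 4 (P fb) ^ 4 \<and> (\<forall>u\<in>U. 1/4 * \<bar>fb u\<bar> \<le> (P f u)^2)"
  proof (intro exI[of _ f'] conjI ballI)
    show "1/40 * \<mu> \<le> lp_norm U 4 (P f') ^ 4"
    proof -
      have "(1/40 * A) / N \<le> Z / N" using Zb N by (rule divide_right_mono[OF _ less_imp_le])
      then show ?thesis
        unfolding lp4 expect_def N_def[symmetric] muA Z_def h_def by simp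
    qed
  next
    fix u assume "u \<in> U"
    show "1/4 * \<bar>f' u\<bar> \<le> (P f u)^2"
    proof (cases "f u = 1 \<and> g u \<ge> 1/2")
      case True
      then have "(1/2)^2 \<le> (g u)^2" by (intro power_mono) auto
      then show ?thesis using True unfolding f'_def g_def by (simp add: power2_eq_square)
    qed (auto simp add: f'_def)
  qed
qed (simp_all)

end
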